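(* Let $(M^4,\omega)$ be a symplectic 4-manifold, let $\Sigma\subset M$ be a symplectic surface, and let $D\subset M$ be an embedded Lagrangian disk with $\partial D\subset\Sigma$. Then the framing of the normal bundle $\nu(D)|_{\partial D}$ induced by $\Sigma$ (namely, by the direction in $T\Sigma$ normal to $\partial D$) is $+1$, relative to the $0$-framing of $D$.
   Context: A neighborhood of the Lagrangian disk $D$ can be symplectically identified with a neighborhood of the unit disk in the zero section $\mathbb{R}^2$ of $T^*\mathbb{R}^2$ (coordinates $(q_1,p_1,q_2,p_2)$, symplectic form $dq_1\wedge dp_1+dq_2\wedge dp_2$), with $D$ corresponding to $\{q_1^2+q_2^2\le 1,\ p_1=p_2=0\}$. The standard coordinates on $\mathbb{R}^2$ induce a trivialization of the cotangent fibers normal to the disk; restricted to $\partial D$ this gives a framing of $\nu(D)|_{\partial D}$ which extends over $D$, and this framing is declared to be the $0$-framing. Framings of $\nu(D)|_{\partial D}$ are measured as integers relative to it. *)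

theory Defs
  imports "HOL-Complex_Analysis.Complex_Analysis"
begin

text \<open>Local model (T*R^2 near the unit disk in the zero section).  Points of R^4 are
  tuples (q1, p1, q2, p2).  The Lagrangian disk D is the unit disk in the (q1,q2)-plane
  with p1 = p2 = 0; its normal fibre at each point is the (p1,p2)-plane, and the
  0-framing of nu(D) over the boundary is the constant framing given by the p-coordinates.\<close>

type_synonym pt4 = "real \<times> real \<times> real \<times> real"

definition omega_std :: "pt4 \<Rightarrow> pt4 \<Rightarrow> real" where
  "omega_std u v = (case u of (a1, b1, a2, b2) \<Rightarrow> case v of (c1, d1, c2, d2) \<Rightarrow>
      a1 * d1 - b1 * c1 + a2 * d2 - b2 * c2)"

definition lag_disk :: "pt4 set" where
  "lag_disk = {(q1, p1, q2, p2). q1\<^sup>2 + q2\<^sup>2 \<le> 1 \<and> p1 = 0 \<and> p2 = 0}"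

text \<open>Boundary circle of D, oriented as the boundary of D (counterclockwise in (q1,q2)).\<close>
definition bdry_circle :: "real \<Rightarrow> pt4" where
  "bdry_circle \<theta> = (cos \<theta>, 0, sin \<theta>, 0)"

text \<open>A collar of the symplectic surface Sigma around the circle boundary(D) inside Sigma:
  a C^1 embedding F of the annulus (R / 2 pi Z) x (-eps, eps) into R^4 with F(theta,0)
  on the boundary circle, derivative F' (continuous), whose tangent planes are
  omega-symplectic.  Sigma near boundary(D) is the image of F.\<close>
definition symplectic_collar ::
  "(real \<times> real \<Rightarrow> pt4) \<Rightarrow> (real \<times> real \<Rightarrow> real \<times> real \<Rightarrow> pt4) \<Rightarrow> real \<Rightarrow> bool" where
  "symplectic_collar F F' \<epsilon> \<longleftrightarrow>
     \<epsilon> > 0 \<and>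
     (\<forall>\<theta> t. \<bar>t\<bar> < \<epsilon> \<longrightarrow> (F has_derivative F' (\<theta>, t)) (at (\<theta>, t))) \<and>
     (\<forall>v. continuous_on (UNIV \<times> {-\<epsilon><..<\<epsilon>}) (\<lambda>x. F' x v)) \<and>
     (\<forall>\<theta> t. F (\<theta> + 2 * pi, t) = F (\<theta>, t)) \<and>
     inj_on F ({0..<2 * pi} \<times> {-\<epsilon><..<\<epsilon>}) \<and>
     (\<forall>\<theta>. F (\<theta>, 0) = bdry_circle \<theta>) \<and>
     (\<forall>\<theta> t. \<bar>t\<bar> < \<epsilon> \<longrightarrow> omega_std (F' (\<theta>, t) (1, 0)) (F' (\<theta>, t) (0, 1)) \<noteq> 0)"

text \<open>Framing of nu(D) over boundary(D) induced by Sigma, measured relative to the 0-framing: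
  the vector in T Sigma transverse to boundary(D) (namely dF/dt at t = 0), projected to the
  normal fibre (p1,p2) of D, viewed in the constant trivialization, gives a loop in
  R^2 - 0 = C - 0 as theta runs once around boundary(D); the framing integer is its
  winding number about 0.\<close>
definition normal_proj :: "pt4 \<Rightarrow> complex" where
  "normal_proj w = Complex (fst (snd w)) (snd (snd (snd w)))"

definition sigma_framing :: "(real \<times> real \<Rightarrow> real \<times> real \<Rightarrow> pt4) \<Rightarrow> complex" where
  "sigma_framing F' = winding_number (\<lambda>s. normal_proj (F' (2 * pi * s, 0) (0, 1))) 0"

end

theory Submission
  imports Defs
begin

lemma bdry_deriv: "(bdry_circle has_derivative (\<lambda>s. s *\<^sub>R (- sin x, 0, cos x, 0))) (at x)"
proof -
  have "((\<lambda>t. (cos t, 0::real, sin t, 0::real)) has_derivative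
     (\<lambda>s. (s * - sin x, 0 * s, s * cos x, 0 * s))) (at x)"
    by (auto intro!: derivative_eq_intros)
  then show ?thesis unfolding bdry_circle_def by (simp add: mult.commute)
qed

lemma seg0: fixes a b :: complex
  assumes "a \<noteq> 0" "b \<noteq> 0" "Re (a * cnj b) \<ge> 0"
  shows "0 \<notin> closed_segment a b"
proof
  assume "0 \<in> closed_segment a b"
  then obtain u where u: "0 \<le> u" "u \<le> 1" "0 = (1 - u) *\<^sub>R a + u *\<^sub>R b"
    by (auto simp: closed_segment_def)
  then have "0 = Re (((1 - u) *\<^sub>R a + u *\<^sub>R b) * cnj b)" by simp
  also have "\<dots> = (1 - u) * Re (a * cnj b) + u * (cmod b)^2"
  proof -
    have "(cmod b)^2 = Re b * Re b + Im b * Im b" by (metis cmod_power2 power2_eq_square)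
    then show ?thesis by (simp add: scaleR_conv_of_real algebra_simps)
  qed
  finally have e: "0 = (1 - u) * Re (a * cnj b) + u * (cmod b)^2" .
  have "(1 - u) * Re (a * cnj b) \<ge> 0" using u assms by simp
  moreover have "u * (cmod b)^2 \<ge> 0" using u by simp
  ultimately have "u * (cmod b)^2 = 0" using e by linarith
  then have "u = 0" using assms by simp
  then show False using u assms by simp
qed


theorem proposition2p1:
  fixes F :: "real \<times> real \<Rightarrow> pt4" and F' :: "real \<times> real \<Rightarrow> real \<times> real \<Rightarrow> pt4"
    and \<epsilon> :: real
  assumes "symplectic_collar F F' \<epsilon>"
  shows "sigma_framing F' = 1"
proof -
  note A = assms[unfolded symplectic_collar_def]
  have ep: "\<epsilon> > 0" using A by blast
  have D: "\<And>x. (F has_derivative F' (x, 0)) (at (x, 0))" using A ep by simp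
  have lin: "\<And>x. linear (F' (x, 0))" using D has_derivative_linear by blast
  have d1: "\<And>x. F' (x,0) (1,0) = (- sin x, 0, cos x, 0)"
  proof -
    fix x :: real
    have "((\<lambda>s. (s, 0::real)) has_derivative (\<lambda>s. (s, 0))) (at x)"
      by (auto intro!: derivative_eq_intros)
    from has_derivative_compose[OF this D[of x]]
    have "((\<lambda>s. F (s, 0)) has_derivative (\<lambda>s. F' (x,0) (s, 0))) (at x)" by simp
    moreover have "(\<lambda>s. F (s, 0)) = bdry_circle" using A by auto
    ultimately have "(bdry_circle has_derivative (\<lambda>s. F' (x,0) (s, 0))) (at x)" by simp
    from has_derivative_unique[OF this bdry_deriv]
    have "(\<lambda>s. F' (x,0) (s, 0)) = (\<lambda>s. s *\<^sub>R (- sin x, 0, cos x, 0))" .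
    from fun_cong[OF this, of 1] show "F' (x,0) (1,0) = (- sin x, 0, cos x, 0)" by simp
  qed
  have per: "F' (2*pi, 0) = F' (0, 0)"
  proof -
    have "((\<lambda>x. x + (2*pi, 0::real)) has_derivative (\<lambda>x. x)) (at (0,0))"
      by (auto intro!: derivative_eq_intros)
    from has_derivative_compose[OF this, of F "F' (2*pi,0)"] D[of "2*pi"]
    have "((\<lambda>x. F (x + (2*pi, 0))) has_derivative F' (2*pi,0)) (at (0,0))" by simp
    moreover have "(\<lambda>x. F (x + (2*pi, 0))) = F"
    proof
      fix x :: "real \<times> real"
      obtain a b where "x = (a, b)" by fastforce
      then show "F (x + (2*pi, 0)) = F x" using A by simp
    qed
    ultimately have "(F has_derivative F' (2*pi,0)) (at (0,0))" by simp
    from has_derivative_unique[OF this D[of 0]] show ?thesis .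
  qed
  define g where "g = (\<lambda>s. normal_proj (F' (2 * pi * s, 0) (0, 1)))"
  define h where "h = (\<lambda>s. Complex (- sin (2 * pi * s)) (cos (2 * pi * s)))"
  define c where "c = circlepath 0 1"
  define r where "r = (\<lambda>s. Re (g s * cnj (h s)))"
  have rne: "\<And>s. r s \<noteq> 0"
  proof -
    fix s
    have "omega_std (F' (2 * pi * s, 0) (1, 0)) (F' (2 * pi * s, 0) (0, 1)) \<noteq> 0" using A ep by simp
    then show "r s \<noteq> 0" unfolding r_def g_def h_def d1
      by (cases "F' (2 * pi * s, 0) (0, 1)") (auto simp: omega_std_def normal_proj_def algebra_simps)
  qed
  have gne: "\<And>s. g s \<noteq> 0" using rne unfolding r_def by (metis mult_zero_left zero_complex.simps(1))
  have hne: "\<And>s. h s \<noteq> 0"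
  proof
    fix s assume "h s = 0"
    then have "sin (2 * pi * s) = 0" "cos (2 * pi * s) = 0" unfolding h_def by (auto simp: complex_eq_iff)
    then show False using sin_cos_squared_add[of "2 * pi * s"] by simp
  qed
  have cne: "\<And>s. c s \<noteq> 0" unfolding c_def circlepath by simp
  have hc: "\<And>s. Re (c s * cnj (h s)) = 0" "\<And>s. Re (c s * cnj (- h s)) = 0"
    unfolding h_def c_def circlepath by (simp_all add: cos_of_real sin_of_real Re_exp Im_exp algebra_simps)
  have contF: "continuous_on {0..1} (\<lambda>s. F' (2 * pi * s, 0) (0, 1))"
  proof -
    have "continuous_on (UNIV \<times> {-\<epsilon><..<\<epsilon>}) (\<lambda>x. F' x (0,1))" using A by blast
    moreover have "continuous_on {0..1} (\<lambda>s::real. (2 * pi * s, 0::real))" by (intro continuous_intros)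
    ultimately show ?thesis
      by (rule continuous_on_compose2) (use ep in auto)
  qed
  have np: "continuous_on UNIV normal_proj"
  proof -
    have eq: "normal_proj = (\<lambda>w. of_real (fst (snd w)) + \<i> * of_real (snd (snd (snd w))))"
      by (auto simp: normal_proj_def fun_eq_iff complex_eq_iff)
    show ?thesis by (subst eq) (intro continuous_intros)
  qed
  have pg: "path g" unfolding path_def g_def
    by (rule continuous_on_compose2[OF np contF]) auto
  have ph: "path h"
  proof -
    have "h = (\<lambda>s. - of_real (sin (2 * pi * s)) + \<i> * of_real (cos (2 * pi * s)))"
      by (auto simp: h_def fun_eq_iff complex_eq_iff)
    then show ?thesis unfolding path_def by (auto intro!: continuous_intros)
  qed
  have pc: "path c" unfolding c_def by simp
  have lg: "pathfinish g = pathstart g" unfolding pathfinish_def pathstart_def g_def using per by simp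
  have lh: "pathfinish h = pathstart h" unfolding pathfinish_def pathstart_def h_def by simp
  have lc: "pathfinish c = pathstart c" unfolding c_def by simp
  have wc: "winding_number c 0 = 1" unfolding c_def by (simp add: winding_number_circlepath_centre)
  have contr: "continuous_on {0..1} r"
    unfolding r_def using pg ph unfolding path_def by (auto intro!: continuous_intros)
  have sgn: "(\<forall>s\<in>{0..1}. r s > 0) \<or> (\<forall>s\<in>{0..1}. r s < 0)"
  proof (rule ccontr)
    assume "\<not> ?thesis"
    then obtain a b where ab: "a \<in> {0..1}" "b \<in> {0..1}" "r a \<le> 0" "r b \<ge> 0"
      by (meson not_less)
    have "connected (r ` {0..1})" by (rule connected_continuous_image[OF contr]) simp
    moreover have "r a \<in> r ` {0..1}" "r b \<in> r ` {0..1}" using ab by auto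
    ultimately have "0 \<in> r ` {0..1}" using ab
      by (metis connected_iff_interval)
    then show False using rne by auto
  qed
  have "winding_number g 0 = 1"
  proof (cases "\<forall>s\<in>{0..1}. r s > 0")
    case True
    have "winding_number g 0 = winding_number h 0"
    proof (rule winding_number_loops_linear_eq[OF ph pg lh lg])
      fix t :: real assume t: "t \<in> {0..1}"
      have "Re (h t * cnj (g t)) = r t" by (simp add: r_def algebra_simps)
      then show "0 \<notin> closed_segment (h t) (g t)"
        by (intro seg0) (use hne gne True t in \<open>auto intro: less_imp_le\<close>)
    qed
    also have "\<dots> = winding_number c 0"
      by (rule winding_number_loops_linear_eq[OF pc ph lc lh])
         (rule seg0, use hne cne hc in auto)
    finally show ?thesis using wc by simp
  next
    case False
    then have F: "\<forall>s\<in>{0..1}. r s < 0" using sgn by blast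
    have pmh: "path (\<lambda>s. - h s)" using ph unfolding path_def by (auto intro!: continuous_intros)
    have lmh: "pathfinish (\<lambda>s. - h s) = pathstart (\<lambda>s. - h s)" using lh by (simp add: pathfinish_def pathstart_def)
    have "winding_number g 0 = winding_number (\<lambda>s. - h s) 0"
    proof (rule winding_number_loops_linear_eq[OF pmh pg lmh lg])
      fix t :: real assume t: "t \<in> {0..1}"
      have "Re (- h t * cnj (g t)) = - r t" by (simp add: r_def algebra_simps)
      moreover have "r t < 0" using F t by blast
      ultimately show "0 \<notin> closed_segment (- h t) (g t)"
        by (intro seg0) (use hne gne in auto)
    qed
    also have "\<dots> = winding_number c 0"
      by (rule winding_number_loops_linear_eq[OF pc pmh lc lmh])
         (rule seg0, use hne cne hc in auto)
    finally show ?thesis using wc by simp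
  qed
  then show ?thesis unfolding sigma_framing_def g_def .
qed

end
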